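(* Let $f\colon\mathbb{R}^n\to\mathbb{R}$ be convex and differentiable with $\|\nabla f(x)-\nabla f(y)\|\le L\|x-y\|$ (Euclidean norm, $L>0$), with a minimizer $x_\star$, $f_\star=f(x_\star)$. Given $x_0$, let $y_0=x_0$ and for $k=0,1,\dots$ \[ y_{k+1}=x_k-\tfrac1L\nabla f(x_k),\qquad x_{k+1}=y_{k+1}+\frac{k}{k+3}(y_{k+1}-y_k)+\frac{k+2}{k+3}(y_{k+1}-x_k). \] Then for $k=1,2,\dots$, $f(y_k)-f_\star\le\dfrac{L\|x_0-x_\star\|^2}{(k+1)^2}$.
   Context: This iteration is called Simple-OGM. *)

theory Defs
  imports "HOL-Analysis.Analysis"
begin

fun ogm_iter :: "('a::real_inner \<Rightarrow> 'a) \<Rightarrow> real \<Rightarrow> 'a \<Rightarrow> nat \<Rightarrow> 'a \<times> 'a" where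
  "ogm_iter g L x0 0 = (x0, x0)"
| "ogm_iter g L x0 (Suc k) =
     (let (xk, yk) = ogm_iter g L x0 k;
          yk1 = xk - (1 / L) *\<^sub>R g xk
      in (yk1 + (real k / (real k + 3)) *\<^sub>R (yk1 - yk)
             + ((real k + 2) / (real k + 3)) *\<^sub>R (yk1 - xk), yk1))"

definition ogm_x :: "('a::real_inner \<Rightarrow> 'a) \<Rightarrow> real \<Rightarrow> 'a \<Rightarrow> nat \<Rightarrow> 'a" where
  "ogm_x g L x0 k = fst (ogm_iter g L x0 k)"

definition ogm_y :: "('a::real_inner \<Rightarrow> 'a) \<Rightarrow> real \<Rightarrow> 'a \<Rightarrow> nat \<Rightarrow> 'a" where
  "ogm_y g L x0 k = snd (ogm_iter g L x0 k)"

end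

theory Submission
  imports Defs
begin


lemma line_deriv:
  fixes f :: "'a::real_inner \<Rightarrow> real"
  assumes "\<And>x. (f has_derivative (\<lambda>h. g x \<bullet> h)) (at x)"
  shows "((\<lambda>t. f (x + t *\<^sub>R d)) has_real_derivative (g (x + t *\<^sub>R d) \<bullet> d)) (at t)"
proof -
  have "((\<lambda>t. x + t *\<^sub>R d) has_derivative (\<lambda>s. s *\<^sub>R d)) (at t)"
    by (auto intro!: derivative_eq_intros)
  from has_derivative_compose[OF this assms]
  have "((\<lambda>t. f (x + t *\<^sub>R d)) has_derivative (\<lambda>s. g (x + t *\<^sub>R d) \<bullet> (s *\<^sub>R d))) (at t)" .
  moreover have "(\<lambda>s. g (x + t *\<^sub>R d) \<bullet> (s *\<^sub>R d)) = (*) (g (x + t *\<^sub>R d) \<bullet> d)"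
    by (auto simp: mult.commute)
  ultimately show ?thesis unfolding has_field_derivative_def by simp
qed

lemma conv_tangent:
  fixes f :: "'a::real_inner \<Rightarrow> real"
  assumes cv: "convex_on UNIV f"
    and d: "\<And>x. (f has_derivative (\<lambda>h. g x \<bullet> h)) (at x)"
  shows "f y \<ge> f x + g x \<bullet> (y - x)"
proof -
  define \<phi> where "\<phi> t = f (x + t *\<^sub>R (y - x))" for t
  have "convex_on UNIV \<phi>"
  proof (rule convex_onI)
    fix t a b :: real assume t: "t > 0" "t < 1"
    have e: "x + ((1 - t) *\<^sub>R a + t *\<^sub>R b) *\<^sub>R (y - x)
       = (1 - t) *\<^sub>R (x + a *\<^sub>R (y - x)) + t *\<^sub>R (x + b *\<^sub>R (y - x))"
      by (simp add: algebra_simps)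
    show "\<phi> ((1 - t) *\<^sub>R a + t *\<^sub>R b) \<le> (1 - t) * \<phi> a + t * \<phi> b"
      unfolding \<phi>_def e using convex_onD[OF cv, of t] t by simp
  qed simp
  moreover have "(\<phi> has_real_derivative (g x \<bullet> (y - x))) (at 0)"
    using line_deriv[OF d, where x=x and t=0 and d="y - x"] unfolding \<phi>_def by simp
  ultimately have "\<phi> 1 - \<phi> 0 \<ge> (g x \<bullet> (y - x)) * (1 - 0)"
    by (intro convex_on_imp_above_tangent[where A=UNIV]) auto
  then show ?thesis unfolding \<phi>_def by simp
qed

lemma descent:
  fixes f :: "'a::real_inner \<Rightarrow> real"
  assumes d: "\<And>x. (f has_derivative (\<lambda>h. g x \<bullet> h)) (at x)"
    and lip: "\<And>x y. norm (g x - g y) \<le> L * norm (x - y)"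
  shows "f y \<le> f x + g x \<bullet> (y - x) + L / 2 * (norm (y - x))\<^sup>2"
proof -
  define \<psi> where "\<psi> t = f (x + t *\<^sub>R (y - x)) - t * (g x \<bullet> (y - x)) - L / 2 * t\<^sup>2 * (norm (y - x))\<^sup>2" for t
  have "\<psi> 1 \<le> \<psi> 0"
  proof (rule DERIV_nonpos_imp_nonincreasing[of 0 1 \<psi>])
    fix t :: real assume t: "0 \<le> t" "t \<le> 1"
    have D: "(\<psi> has_real_derivative (g (x + t *\<^sub>R (y - x)) \<bullet> (y - x) - g x \<bullet> (y - x)
        - L / 2 * (2 * t) * (norm (y - x))\<^sup>2)) (at t)"
      unfolding \<psi>_def
      by (auto intro!: derivative_eq_intros line_deriv[OF d])
    have "g (x + t *\<^sub>R (y - x)) \<bullet> (y - x) - g x \<bullet> (y - x) = (g (x + t *\<^sub>R (y - x)) - g x) \<bullet> (y - x)"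
      by (simp add: inner_diff_left)
    also have "\<dots> \<le> norm (g (x + t *\<^sub>R (y - x)) - g x) * norm (y - x)"
      by (rule norm_cauchy_schwarz)
    also have "\<dots> \<le> L * norm (t *\<^sub>R (y - x)) * norm (y - x)"
      using lip[of "x + t *\<^sub>R (y - x)" x] by (simp add: mult_right_mono)
    also have "\<dots> = L / 2 * (2 * t) * (norm (y - x))\<^sup>2"
      using t by (simp add: power2_eq_square)
    finally show "\<exists>y'. (\<psi> has_real_derivative y') (at t) \<and> y' \<le> 0"
      using D by (intro exI[of _ "g (x + t *\<^sub>R (y - x)) \<bullet> (y - x) - g x \<bullet> (y - x)
        - L / 2 * (2 * t) * (norm (y - x))\<^sup>2"]) auto
  qed simp
  then show ?thesis unfolding \<psi>_def by simp
qed

lemma interp: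
  fixes f :: "'a::real_inner \<Rightarrow> real"
  assumes C: "\<And>x y. f y \<ge> f x + g x \<bullet> (y - x)"
    and D: "\<And>x y. f y \<le> f x + g x \<bullet> (y - x) + L / 2 * (norm (y - x))\<^sup>2"
    and L: "L > 0"
  shows "f u \<ge> f v + g v \<bullet> (u - v) + (norm (g u - g v))\<^sup>2 / (2 * L)"
proof -
  define \<delta> where "\<delta> = g u - g v"
  define w where "w = u - (1 / L) *\<^sub>R \<delta>"
  have h1: "f w \<ge> f v + g v \<bullet> (w - v)" by (rule C)
  have h2: "f w \<le> f u + g u \<bullet> (w - u) + L / 2 * (norm (w - u))\<^sup>2" by (rule D)
  have e1: "g u \<bullet> (w - u) = - ((1 / L) * (g u \<bullet> \<delta>))" unfolding w_def by (simp add: inner_diff_right)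
  have e2: "g v \<bullet> (w - v) = - ((1 / L) * (g v \<bullet> \<delta>)) + g v \<bullet> (u - v)" unfolding w_def
    by (simp add: inner_diff_right)
  have e3: "(norm (w - u))\<^sup>2 = (norm \<delta>)\<^sup>2 / L\<^sup>2" unfolding w_def using L
    by (simp add: power2_eq_square field_simps)
  have e4: "g u \<bullet> \<delta> - g v \<bullet> \<delta> = (norm \<delta>)\<^sup>2"
    unfolding \<delta>_def by (simp add: inner_diff_left power2_norm_eq_inner)
  have "L / 2 * ((norm \<delta>)\<^sup>2 / L\<^sup>2) = (norm \<delta>)\<^sup>2 / (2 * L)" using L by (simp add: power2_eq_square field_simps)
  moreover have "(1 / L) * (g u \<bullet> \<delta>) - (1 / L) * (g v \<bullet> \<delta>) = (norm \<delta>)\<^sup>2 / L"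
    using e4 L by (simp add: field_simps)
  moreover have "(norm \<delta>)\<^sup>2 / L = 2 * ((norm \<delta>)\<^sup>2 / (2 * L))" using L by simp
  ultimately show ?thesis using h1 h2[unfolded e3] e1 e2 unfolding \<delta>_def[symmetric] by linarith
qed

lemma norm_sq_diff_scale:
  fixes a b :: "'a::real_inner"
  shows "(norm (a - c *\<^sub>R b))\<^sup>2 = (norm a)\<^sup>2 - 2 * c * (a \<bullet> b) + c\<^sup>2 * (norm b)\<^sup>2"
  unfolding power2_norm_eq_inner
  by (simp add: inner_diff_left inner_diff_right inner_commute power2_eq_square algebra_simps)

lemma step_ineq:
  fixes x g0 x' g1 xs :: "'a::real_inner"
  assumes L: "L > 0"
    and a: "fs \<ge> fx' + g1 \<bullet> (xs - x') + (norm g1)\<^sup>2 / (2 * L)"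
    and b: "fx \<ge> fx' + g1 \<bullet> (x - x') + (norm (g0 - g1))\<^sup>2 / (2 * L)"
    and c: "fx \<ge> fs + (norm g0)\<^sup>2 / (2 * L)"
    and th: "\<theta>' \<ge> 1" "\<theta>'\<^sup>2 - \<theta>' \<le> \<theta>\<^sup>2"
    and z: "z' = \<theta>' *\<^sub>R x' - (\<theta>' - 1) *\<^sub>R (x - (1 / L) *\<^sub>R g0)"
  shows "2 * \<theta>'\<^sup>2 * (fx' - fs - (norm g1)\<^sup>2 / (2 * L)) + L / 2 * (norm (z' - (2 * \<theta>' / L) *\<^sub>R g1 - xs))\<^sup>2
     \<le> 2 * \<theta>\<^sup>2 * (fx - fs - (norm g0)\<^sup>2 / (2 * L)) + L / 2 * (norm (z' - xs))\<^sup>2"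
proof -
  define A where "A = g1 \<bullet> (x' - xs)"
  define B where "B = g1 \<bullet> (x' - x)"
  define C where "C = g1 \<bullet> g0"
  define N0 where "N0 = (norm g0)\<^sup>2"
  define N1 where "N1 = (norm g1)\<^sup>2"
  have zz: "z' - (2 * \<theta>' / L) *\<^sub>R g1 - xs = (z' - xs) - (2 * \<theta>' / L) *\<^sub>R g1" by simp
  have n1: "(norm (z' - (2 * \<theta>' / L) *\<^sub>R g1 - xs))\<^sup>2 = (norm (z' - xs))\<^sup>2
       - 2 * (2 * \<theta>' / L) * ((z' - xs) \<bullet> g1) + (2 * \<theta>' / L)\<^sup>2 * N1"
    unfolding zz norm_sq_diff_scale N1_def ..
  have zx: "z' - xs = (x' - xs) + (\<theta>' - 1) *\<^sub>R (x' - x) + ((\<theta>' - 1) / L) *\<^sub>R g0"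
    unfolding z by (simp add: algebra_simps)
  have "(z' - xs) \<bullet> g1 = g1 \<bullet> (z' - xs)" by (rule inner_commute)
  also have "\<dots> = g1 \<bullet> (x' - xs) + g1 \<bullet> ((\<theta>' - 1) *\<^sub>R (x' - x)) + g1 \<bullet> (((\<theta>' - 1) / L) *\<^sub>R g0)"
    unfolding zx inner_add_right ..
  finally have ip: "(z' - xs) \<bullet> g1 = A + (\<theta>' - 1) * B + ((\<theta>' - 1) / L) * C"
    unfolding A_def B_def C_def by simp
  have nd: "(norm (g0 - g1))\<^sup>2 = N0 - 2 * C + N1"
    unfolding N0_def N1_def C_def
    by (simp add: power2_norm_eq_inner inner_diff_left inner_diff_right inner_commute)
  have sa: "fs - fx' + A - N1 / (2 * L) \<ge> 0"
    using a unfolding A_def N1_def by (simp add: inner_diff_right)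
  have sb: "fx - fx' + B - (N0 - 2 * C + N1) / (2 * L) \<ge> 0"
    using b unfolding B_def nd by (simp add: inner_diff_right)
  have sc: "fx - fs - N0 / (2 * L) \<ge> 0" using c unfolding N0_def by simp
  have p1: "2 * \<theta>' * (fs - fx' + A - N1 / (2 * L)) \<ge> 0" using sa th by simp
  have p2: "2 * \<theta>' * (\<theta>' - 1) * (fx - fx' + B - (N0 - 2 * C + N1) / (2 * L)) \<ge> 0"
    using sb th by simp
  have p3: "2 * (\<theta>\<^sup>2 - \<theta>'\<^sup>2 + \<theta>') * (fx - fs - N0 / (2 * L)) \<ge> 0" using sc th by simp
  have iden: "(2 * \<theta>\<^sup>2 * (fx - fs - N0 / (2 * L)) + L / 2 * (norm (z' - xs))\<^sup>2)
     - (2 * \<theta>'\<^sup>2 * (fx' - fs - N1 / (2 * L)) + L / 2 * ((norm (z' - xs))\<^sup>2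
       - 2 * (2 * \<theta>' / L) * (A + (\<theta>' - 1) * B + ((\<theta>' - 1) / L) * C) + (2 * \<theta>' / L)\<^sup>2 * N1))
     = 2 * \<theta>' * (fs - fx' + A - N1 / (2 * L))
       + 2 * \<theta>' * (\<theta>' - 1) * (fx - fx' + B - (N0 - 2 * C + N1) / (2 * L))
       + 2 * (\<theta>\<^sup>2 - \<theta>'\<^sup>2 + \<theta>') * (fx - fs - N0 / (2 * L))"
    using L by (simp add: field_simps power2_eq_square)
  show ?thesis unfolding n1 ip N0_def[symmetric] N1_def[symmetric] using iden p1 p2 p3 by linarith
qed


lemma grad_step:
  fixes f :: "'a::real_inner \<Rightarrow> real"
  assumes D: "\<And>x y. f y \<le> f x + g x \<bullet> (y - x) + L / 2 * (norm (y - x))\<^sup>2"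
    and L: "L > 0"
  shows "f (x - (1 / L) *\<^sub>R g x) \<le> f x - (norm (g x))\<^sup>2 / (2 * L)"
proof -
  have "f (x - (1 / L) *\<^sub>R g x) \<le> f x + g x \<bullet> (- ((1 / L) *\<^sub>R g x)) + L / 2 * (norm (- ((1 / L) *\<^sub>R g x)))\<^sup>2"
    using D[where x=x and y="x - (1 / L) *\<^sub>R g x"] by simp
  also have "\<dots> = f x - (norm (g x))\<^sup>2 / (2 * L)"
    using L by (simp add: power2_norm_eq_inner[symmetric] power_mult_distrib power2_eq_square field_simps)
  finally show ?thesis .
qed

lemma ZS_real:
  fixes L k a c b :: real
  assumes L: "L > 0" and k: "k \<ge> 0"
  shows "((1 + k + 2) / 2) * (a - (1 / L) * c + (k / (k + 3)) * (a - (1 / L) * c - b)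
      + ((k + 2) / (k + 3)) * (a - (1 / L) * c - a))
     - ((1 + k + 2) / 2 - 1) * (a - (1 / L) * c)
   = ((k + 2) / 2) * a - ((k + 2) / 2 - 1) * b - (2 * ((k + 2) / 2) / L) * c"
proof -
  define y where "y = a - (1 / L) * c"
  define T where "T = (1 + k + 2) / 2"
  have k3: "k + 3 \<noteq> 0" using k by simp
  have h1: "T * (k / (k + 3)) = k / 2" unfolding T_def using k3 by (simp add: field_simps)
  have h2: "T * ((k + 2) / (k + 3)) = (k + 2) / 2" unfolding T_def using k3 by (simp add: field_simps)
  have "T * (y + (k / (k + 3)) * (y - b) + ((k + 2) / (k + 3)) * (y - a)) - (T - 1) * y
      = T * y + (T * (k / (k + 3))) * (y - b) + (T * ((k + 2) / (k + 3))) * (y - a) - (T - 1) * y"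
    by (simp add: algebra_simps)
  also have "\<dots> = T * y + (k / 2) * (y - b) + ((k + 2) / 2) * (y - a) - (T - 1) * y"
    unfolding h1 h2 ..
  also have "\<dots> = ((k + 2) / 2) * a - ((k + 2) / 2 - 1) * b - (2 * ((k + 2) / 2) / L) * c"
    unfolding T_def y_def using L by (simp add: field_simps)
  finally show ?thesis unfolding T_def y_def .
qed

theorem corollary2:
  fixes f :: "real ^ 'n \<Rightarrow> real" and g :: "real ^ 'n \<Rightarrow> real ^ 'n"
    and L :: real and xs x0 :: "real ^ 'n" and k :: nat
  assumes "convex_on UNIV f"
    and "\<And>x. (f has_derivative (\<lambda>h. g x \<bullet> h)) (at x)"
    and "L > 0"
    and "\<And>x y. norm (g x - g y) \<le> L * norm (x - y)"
    and "\<And>x. f xs \<le> f x"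
    and "k \<ge> 1"
  shows "f (ogm_y g L x0 k) - f xs \<le> L * (norm (x0 - xs))\<^sup>2 / (real k + 1)\<^sup>2"
proof -
  note cv = assms(1) and dv = assms(2) and Lp = assms(3) and lip = assms(4) and mn = assms(5)
  have C: "\<And>x y. f y \<ge> f x + g x \<bullet> (y - x)" using conv_tangent[OF cv dv] .
  have D: "\<And>x y. f y \<le> f x + g x \<bullet> (y - x) + L / 2 * (norm (y - x))\<^sup>2"
    using descent[OF dv lip] .
  have I: "\<And>u v. f u \<ge> f v + g v \<bullet> (u - v) + (norm (g u - g v))\<^sup>2 / (2 * L)"
    using interp[OF C D Lp] .
  have GS: "\<And>x. f (x - (1 / L) *\<^sub>R g x) \<le> f x - (norm (g x))\<^sup>2 / (2 * L)"
    using grad_step[OF D Lp] .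
  have gxs: "g xs = 0"
  proof -
    have "f xs \<le> f xs - (norm (g xs))\<^sup>2 / (2 * L)" using GS[of xs] mn[of "xs - (1 / L) *\<^sub>R g xs"] by simp
    then have "(norm (g xs))\<^sup>2 / (2 * L) \<le> 0" by simp
    then have "(norm (g xs))\<^sup>2 \<le> 0" using Lp by (simp add: divide_le_0_iff)
    then show ?thesis by simp
  qed
  define X where "X = ogm_x g L x0"
  define Y where "Y = ogm_y g L x0"
  have X0: "X 0 = x0" and Y0: "Y 0 = x0" unfolding X_def Y_def ogm_x_def ogm_y_def by simp_all
  have YS: "Y (Suc j) = X j - (1 / L) *\<^sub>R g (X j)" for j
    unfolding X_def Y_def ogm_x_def ogm_y_def by (simp add: Let_def split: prod.split)
  have XS: "X (Suc j) = Y (Suc j) + (real j / (real j + 3)) *\<^sub>R (Y (Suc j) - Y j)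
      + ((real j + 2) / (real j + 3)) *\<^sub>R (Y (Suc j) - X j)" for j
    unfolding X_def Y_def ogm_x_def ogm_y_def by (simp add: Let_def split: prod.split)
  define th where "th j = (real j + 2) / 2" for j
  define Z where "Z j = th j *\<^sub>R X j - (th j - 1) *\<^sub>R Y j" for j
  have ZS: "Z (Suc j) = Z j - (2 * th j / L) *\<^sub>R g (X j)" for j
  proof -
    show ?thesis
      unfolding vec_eq_iff
    proof (intro allI)
      fix i
      show "Z (Suc j) $ i = (Z j - (2 * th j / L) *\<^sub>R g (X j)) $ i"
        unfolding Z_def XS YS th_def
        apply (simp only: vector_add_component vector_minus_component vector_scaleR_component
            of_nat_Suc real_scaleR_def)
        by (rule ZS_real[OF Lp]) simp
    qed
  qed
  define U where "U j = 2 * (th j)\<^sup>2 * (f (X j) - f xs - (norm (g (X j)))\<^sup>2 / (2 * L))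
     + L / 2 * (norm (Z (Suc j) - xs))\<^sup>2" for j
  have U0: "U 0 \<le> L / 2 * (norm (x0 - xs))\<^sup>2"
  proof -
    have z1: "Z (Suc 0) - xs = (x0 - xs) - (2 / L) *\<^sub>R g x0"
      using ZS[of 0] unfolding Z_def th_def X0 Y0 by simp
    have i0: "f xs \<ge> f x0 + g x0 \<bullet> (xs - x0) + (norm (g x0))\<^sup>2 / (2 * L)"
      using I[where u=xs and v=x0] gxs by (simp add: norm_minus_commute)
    have "U 0 = 2 * (f x0 - f xs - (norm (g x0))\<^sup>2 / (2 * L))
       + L / 2 * ((norm (x0 - xs))\<^sup>2 - 2 * (2 / L) * ((x0 - xs) \<bullet> g x0) + (2 / L)\<^sup>2 * (norm (g x0))\<^sup>2)"
      unfolding U_def z1 norm_sq_diff_scale by (simp add: th_def X0)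
    also have "\<dots> = L / 2 * (norm (x0 - xs))\<^sup>2 + 2 * (f x0 - f xs - (x0 - xs) \<bullet> g x0 + (norm (g x0))\<^sup>2 / (2 * L))"
      using Lp by (simp add: field_simps power2_eq_square)
    also have "\<dots> \<le> L / 2 * (norm (x0 - xs))\<^sup>2"
    proof -
      have "(x0 - xs) \<bullet> g x0 = - (g x0 \<bullet> (xs - x0))"
        by (simp add: inner_commute inner_diff_right inner_diff_left)
      then have B: "f x0 - f xs - (x0 - xs) \<bullet> g x0 + (norm (g x0))\<^sup>2 / (2 * L) \<le> 0"
        using i0 by linarith
      show ?thesis unfolding add_le_same_cancel1 using B by simp
    qed
    finally show ?thesis .
  qed
  have US: "U (Suc j) \<le> U j" for j
  proof -
    have a: "f xs \<ge> f (X (Suc j)) + g (X (Suc j)) \<bullet> (xs - X (Suc j)) + (norm (g (X (Suc j))))\<^sup>2 / (2 * L)"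
      using I[where u=xs and v="X (Suc j)"] gxs by simp
    have b: "f (X j) \<ge> f (X (Suc j)) + g (X (Suc j)) \<bullet> (X j - X (Suc j)) + (norm (g (X j) - g (X (Suc j))))\<^sup>2 / (2 * L)"
      using I[where u="X j" and v="X (Suc j)"] .
    have c: "f (X j) \<ge> f xs + (norm (g (X j)))\<^sup>2 / (2 * L)"
      using I[where u="X j" and v=xs] gxs by simp
    have t1: "th (Suc j) \<ge> 1" unfolding th_def by simp
    have t2: "(th (Suc j))\<^sup>2 - th (Suc j) \<le> (th j)\<^sup>2" unfolding th_def by (simp add: power2_eq_square field_simps)
    have z: "Z (Suc j) = th (Suc j) *\<^sub>R X (Suc j) - (th (Suc j) - 1) *\<^sub>R (X j - (1 / L) *\<^sub>R g (X j))"
      unfolding Z_def YS ..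
    show ?thesis
      using step_ineq[OF Lp a b c t1 t2 z] unfolding U_def ZS[of "Suc j"] by simp
  qed
  have Uk: "U j \<le> U 0" for j
  proof (induction j)
    case (Suc j) then show ?case using US[of j] by linarith
  qed simp
  obtain m where km: "k = Suc m" using assms(6) by (cases k) auto
  have fy: "f (Y (Suc m)) \<le> f (X m) - (norm (g (X m)))\<^sup>2 / (2 * L)"
    unfolding YS by (rule GS)
  have "2 * (th m)\<^sup>2 * (f (Y (Suc m)) - f xs) \<le> 2 * (th m)\<^sup>2 * (f (X m) - f xs - (norm (g (X m)))\<^sup>2 / (2 * L))"
    using fy by (intro mult_left_mono) auto
  also have "\<dots> \<le> U m" unfolding U_def using Lp by simp
  also have "\<dots> \<le> L / 2 * (norm (x0 - xs))\<^sup>2" using Uk[of m] U0 by linarith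
  finally have fin: "2 * (th m)\<^sup>2 * (f (Y (Suc m)) - f xs) \<le> L / 2 * (norm (x0 - xs))\<^sup>2" .
  have thp: "(th m)\<^sup>2 > 0" unfolding th_def by simp
  have "f (Y (Suc m)) - f xs \<le> (L / 2 * (norm (x0 - xs))\<^sup>2) / (2 * (th m)\<^sup>2)"
    using fin thp by (simp add: field_simps)
  also have "\<dots> = L * (norm (x0 - xs))\<^sup>2 / (real k + 1)\<^sup>2"
  proof -
    have e: "real k + 1 = real m + 2" unfolding km by simp
    have pos: "(real m + 2)\<^sup>2 \<noteq> 0" by simp
    show ?thesis unfolding th_def e using pos by (simp add: power_divide field_simps)
  qed
  finally show ?thesis unfolding Y_def km .
qed

end
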